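(* For every multi-type resource allocation problem and every profile $R$ of strict linear orders over bundles, the assignment $\mathrm{MPS}(R)$ is lexi-efficient.
   Context: Setting: $N=\{1,\dots,n\}$ agents; $M=D_1\cup\dots\cup D_p$ items with pairwise disjoint types, $|D_i|=n$, unit supply; bundles $\mathcal D=D_1\times\dots\times D_p$; each agent $j$ has a strict linear order $\succ_j$ on $\mathcal D$. An assignment is an $n\times|\mathcal D|$ matrix $(p_{j,x})$ with entries in $[0,1]$, rows summing to $1$, and $\sum_j\sum_{x\ni o}p_{j,x}=1$ for every item $o$. Lexicographic dominance: allocation $p$ lexicographically dominates $q$ w.r.t. $\succ$ if there is a bundle $x$ with $p_x>q_x$ and $p_y\ge q_y$ for all $y\succ x$. $P$ is lexi-efficient if there is no assignment $Q$ such that $Q_j$ lexicographically dominates $P_j$ w.r.t. $\succ_j$ for every agent $j$. MPS (multi-type probabilistic serial): items start with supply $1$. A bundle is available if all its items have positive remaining supply. Continuously in time, each agent eats her $\succ_j$-most-preferred available bundle at rate $1$, which means each item of that bundle is consumed at rate $1$ by her and $p_{j,x}$ grows at rate $1$; when an item's supply reaches $0$, it is exhausted and every bundle containing it becomes unavailable, and agents switch to their next most preferred available bundle. The process ends when all items are exhausted (at time $1$); the accumulated matrix $(p_{j,x})$ is $\mathrm{MPS}(R)$. *)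

theory Defs
  imports Complex_Main
begin

text \<open>Bundles: lists x of length p with x!i in D i (item of type i+1, indices 0..p-1). Preferences: pr j x y means x is
  strictly preferred to y by agent j.\<close>

definition bundles :: "nat \<Rightarrow> (nat \<Rightarrow> 'o set) \<Rightarrow> 'o list set" where
  "bundles p D = {x. length x = p \<and> (\<forall>i<p. x ! i \<in> D i)}"

definition strict_linear_order_on :: "'b set \<Rightarrow> ('b \<Rightarrow> 'b \<Rightarrow> bool) \<Rightarrow> bool" where
  "strict_linear_order_on B r \<longleftrightarrow>
     (\<forall>x\<in>B. \<not> r x x) \<and>
     (\<forall>x\<in>B. \<forall>y\<in>B. \<forall>z\<in>B. r x y \<longrightarrow> r y z \<longrightarrow> r x z) \<and>
     (\<forall>x\<in>B. \<forall>y\<in>B. x \<noteq> y \<longrightarrow> r x y \<or> r y x)"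

definition is_assignment ::
  "'a set \<Rightarrow> 'o set \<Rightarrow> 'o list set \<Rightarrow> ('a \<Rightarrow> 'o list \<Rightarrow> real) \<Rightarrow> bool" where
  "is_assignment N M B Q \<longleftrightarrow>
     (\<forall>j\<in>N. \<forall>x\<in>B. 0 \<le> Q j x \<and> Q j x \<le> 1) \<and>
     (\<forall>j\<in>N. (\<Sum>x\<in>B. Q j x) = 1) \<and>
     (\<forall>it\<in>M. (\<Sum>j\<in>N. \<Sum>x\<in>{x\<in>B. it \<in> set x}. Q j x) = 1)"

definition lex_dominates ::
  "'o list set \<Rightarrow> ('o list \<Rightarrow> 'o list \<Rightarrow> bool) \<Rightarrow> ('o list \<Rightarrow> real) \<Rightarrow> ('o list \<Rightarrow> real) \<Rightarrow> bool" where
  "lex_dominates B r p q \<longleftrightarrow>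
     (\<exists>x\<in>B. p x > q x \<and> (\<forall>y\<in>B. r y x \<longrightarrow> p y \<ge> q y))"

definition lexi_efficient ::
  "'a set \<Rightarrow> 'o set \<Rightarrow> 'o list set \<Rightarrow> ('a \<Rightarrow> 'o list \<Rightarrow> 'o list \<Rightarrow> bool)
     \<Rightarrow> ('a \<Rightarrow> 'o list \<Rightarrow> real) \<Rightarrow> bool" where
  "lexi_efficient N M B pr P \<longleftrightarrow>
     \<not> (\<exists>Q. is_assignment N M B Q \<and> (\<forall>j\<in>N. lex_dominates B (pr j) (Q j) (P j)))"

text \<open>s = remaining supply of each item.\<close>
definition available :: "'o list set \<Rightarrow> ('o \<Rightarrow> real) \<Rightarrow> 'o list \<Rightarrow> bool" where
  "available B s x \<longleftrightarrow> x \<in> B \<and> (\<forall>it\<in>set x. s it > 0)"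

definition top_bundle ::
  "'o list set \<Rightarrow> ('a \<Rightarrow> 'o list \<Rightarrow> 'o list \<Rightarrow> bool) \<Rightarrow> ('o \<Rightarrow> real) \<Rightarrow> 'a \<Rightarrow> 'o list" where
  "top_bundle B pr s j =
     (THE x. available B s x \<and> (\<forall>y. available B s y \<and> y \<noteq> x \<longrightarrow> pr j x y))"

definition eat_rate ::
  "'a set \<Rightarrow> 'o list set \<Rightarrow> ('a \<Rightarrow> 'o list \<Rightarrow> 'o list \<Rightarrow> bool) \<Rightarrow> ('o \<Rightarrow> real) \<Rightarrow> 'o \<Rightarrow> real" where
  "eat_rate N B pr s it = real (card {j\<in>N. it \<in> set (top_bundle B pr s j)})"

definition stage_length ::
  "'a set \<Rightarrow> 'o set \<Rightarrow> 'o list set \<Rightarrow> ('a \<Rightarrow> 'o list \<Rightarrow> 'o list \<Rightarrow> bool) \<Rightarrow> ('o \<Rightarrow> real) \<Rightarrow> real" where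
  "stage_length N M B pr s =
     Min {s it / eat_rate N B pr s it | it. it \<in> M \<and> eat_rate N B pr s it > 0}"

definition mps_step ::
  "'a set \<Rightarrow> 'o set \<Rightarrow> 'o list set \<Rightarrow> ('a \<Rightarrow> 'o list \<Rightarrow> 'o list \<Rightarrow> bool)
     \<Rightarrow> ('o \<Rightarrow> real) \<times> ('a \<Rightarrow> 'o list \<Rightarrow> real) \<Rightarrow> ('o \<Rightarrow> real) \<times> ('a \<Rightarrow> 'o list \<Rightarrow> real)" where
  "mps_step N M B pr st =
     (let s = fst st; P = snd st; d = stage_length N M B pr s in
       (\<lambda>it. s it - d * eat_rate N B pr s it,
        \<lambda>j x. P j x + (if j \<in> N \<and> x = top_bundle B pr s j then d else 0)))"

definition mps_continues ::
  "'a set \<Rightarrow> 'o set \<Rightarrow> 'o list set \<Rightarrow> ('a \<Rightarrow> 'o list \<Rightarrow> 'o list \<Rightarrow> bool) \<Rightarrow> ('o \<Rightarrow> real) \<Rightarrow> bool" where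
  "mps_continues N M B pr s \<longleftrightarrow>
     (\<exists>x. available B s x) \<and> {it\<in>M. eat_rate N B pr s it > 0} \<noteq> {}"

fun mps_iter ::
  "'a set \<Rightarrow> 'o set \<Rightarrow> 'o list set \<Rightarrow> ('a \<Rightarrow> 'o list \<Rightarrow> 'o list \<Rightarrow> bool) \<Rightarrow> nat
     \<Rightarrow> ('o \<Rightarrow> real) \<times> ('a \<Rightarrow> 'o list \<Rightarrow> real) \<Rightarrow> ('o \<Rightarrow> real) \<times> ('a \<Rightarrow> 'o list \<Rightarrow> real)" where
  "mps_iter N M B pr 0 st = st"
| "mps_iter N M B pr (Suc k) st =
     (if mps_continues N M B pr (fst st) then mps_iter N M B pr k (mps_step N M B pr st) else st)"

text \<open>Each stage exhausts at least one item of M, so card M stages suffice.\<close>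
definition MPS ::
  "'a set \<Rightarrow> 'o set \<Rightarrow> 'o list set \<Rightarrow> ('a \<Rightarrow> 'o list \<Rightarrow> 'o list \<Rightarrow> bool) \<Rightarrow> ('a \<Rightarrow> 'o list \<Rightarrow> real)" where
  "MPS N M B pr = snd (mps_iter N M B pr (card M) (\<lambda>_. 1, \<lambda>_ _. 0))"

end

theory Submission
  imports Defs
begin

lemma max_exists:
  assumes fin: "finite A" and ne: "A \<noteq> {}" and sub: "A \<subseteq> B" and slo: "strict_linear_order_on B r"
  shows "\<exists>x\<in>A. \<forall>y\<in>A. y \<noteq> x \<longrightarrow> r x y"
proof -
  have tr: "\<forall>x\<in>B. \<forall>y\<in>B. \<forall>z\<in>B. r x y \<longrightarrow> r y z \<longrightarrow> r x z"
    using slo unfolding strict_linear_order_on_def by (elim conjE)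
  have tot: "\<forall>x\<in>B. \<forall>y\<in>B. x \<noteq> y \<longrightarrow> r x y \<or> r y x"
    using slo unfolding strict_linear_order_on_def by (elim conjE)
  show ?thesis
  using fin ne sub
  proof (induction A rule: finite_ne_induct)
    case (singleton x) then show ?case by simp
  next
    case (insert a F)
    have FB: "F \<subseteq> B" using insert.prems by simp
    have aB: "a \<in> B" using insert.prems by simp
    obtain x where xF: "x \<in> F" and xm: "\<forall>y\<in>F. y \<noteq> x \<longrightarrow> r x y"
      using insert.IH[OF FB] by blast
    have xB: "x \<in> B" using xF FB by blast
    have ax: "a \<noteq> x" using xF insert.hyps(3) by blast
    show ?case
    proof (cases "r a x")
      case True
      have "\<forall>y\<in>insert a F. y \<noteq> a \<longrightarrow> r a y"
      proof (intro ballI impI)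
        fix y assume y1: "y \<in> insert a F" and y2: "y \<noteq> a"
        then have y: "y \<in> F" by simp
        show "r a y"
        proof (cases "y = x")
          case True then show ?thesis using \<open>r a x\<close> by simp
        next
          case False
          then have rxy: "r x y" using xm y by blast
          have yB: "y \<in> B" using y FB by blast
          show ?thesis using tr aB xB yB \<open>r a x\<close> rxy by blast
        qed
      qed
      then show ?thesis by blast
    next
      case False
      then have rxa: "r x a" using tot aB xB ax by blast
      have "\<forall>y\<in>insert a F. y \<noteq> x \<longrightarrow> r x y" using rxa xm by blast
      then show ?thesis using xF by blast
    qed
  qed
qed

lemma top_spec:
  assumes "strict_linear_order_on B (pr j)" "finite B" "\<exists>x. available B s x"
  shows "available B s (top_bundle B pr s j) \<and>
    (\<forall>y. available B s y \<and> y \<noteq> top_bundle B pr s j \<longrightarrow> pr j (top_bundle B pr s j) y)"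
proof -
  let ?A = "{x. available B s x}"
  have sub: "?A \<subseteq> B" by (auto simp: available_def)
  have "finite ?A" using sub assms(2) finite_subset by blast
  moreover have "?A \<noteq> {}" using assms(3) by auto
  ultimately obtain x where x: "x \<in> ?A" "\<forall>y\<in>?A. y \<noteq> x \<longrightarrow> pr j x y"
    using max_exists[OF _ _ sub assms(1)] by blast
  have ex1: "\<exists>!x. available B s x \<and> (\<forall>y. available B s y \<and> y \<noteq> x \<longrightarrow> pr j x y)"
  proof (rule ex1I[of _ x])
    show "available B s x \<and> (\<forall>y. available B s y \<and> y \<noteq> x \<longrightarrow> pr j x y)" using x by auto
  next
    fix z assume z: "available B s z \<and> (\<forall>y. available B s y \<and> y \<noteq> z \<longrightarrow> pr j z y)"
    show "z = x"
    proof (rule ccontr)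
      assume "z \<noteq> x"
      then have "pr j z x" "pr j x z" using x z by auto
      moreover have "x \<in> B" "z \<in> B" using x z by (auto simp: available_def)
      ultimately show False using assms(1) unfolding strict_linear_order_on_def by blast
    qed
  qed
  show ?thesis unfolding top_bundle_def by (rule theI'[OF ex1])
qed

lemma iter_char:
  "\<exists>K\<le>f. mps_iter N M B pr f st = (mps_step N M B pr ^^ K) st \<and>
     (\<forall>m<K. mps_continues N M B pr (fst ((mps_step N M B pr ^^ m) st))) \<and>
     (K = f \<or> \<not> mps_continues N M B pr (fst ((mps_step N M B pr ^^ K) st)))"
proof (induction f arbitrary: st)
  case 0 then show ?case by auto
next
  case (Suc f)
  show ?case
  proof (cases "mps_continues N M B pr (fst st)")
    case True
    obtain K where K: "K \<le> f" "mps_iter N M B pr f (mps_step N M B pr st) = (mps_step N M B pr ^^ K) (mps_step N M B pr st)"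
      "\<forall>m<K. mps_continues N M B pr (fst ((mps_step N M B pr ^^ m) (mps_step N M B pr st)))"
      "K = f \<or> \<not> mps_continues N M B pr (fst ((mps_step N M B pr ^^ K) (mps_step N M B pr st)))"
      using Suc.IH by blast
    have eq: "\<And>m. (mps_step N M B pr ^^ m) (mps_step N M B pr st) = (mps_step N M B pr ^^ Suc m) st"
      by (simp add: funpow_Suc_right del: funpow.simps)
    have "\<forall>m<Suc K. mps_continues N M B pr (fst ((mps_step N M B pr ^^ m) st))"
    proof (intro allI impI)
      fix m assume "m < Suc K"
      then show "mps_continues N M B pr (fst ((mps_step N M B pr ^^ m) st))"
        using True K(3) eq by (cases m) auto
    qed
    then show ?thesis using K True eq by (intro exI[of _ "Suc K"]) auto
  next
    case False
    then show ?thesis by (intro exI[of _ 0]) auto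
  qed
qed

theorem theorem4:
  fixes N :: "'a set" and D :: "nat \<Rightarrow> 'o set" and n p :: nat
    and pr :: "'a \<Rightarrow> 'o list \<Rightarrow> 'o list \<Rightarrow> bool"
  assumes "finite N" and "card N = n" and "n \<ge> 1" and "p \<ge> 1"
    and "\<And>i. i < p \<Longrightarrow> finite (D i) \<and> card (D i) = n"
    and "\<And>i k. i < p \<Longrightarrow> k < p \<Longrightarrow> i \<noteq> k \<Longrightarrow> D i \<inter> D k = {}"
    and "\<And>j. j \<in> N \<Longrightarrow> strict_linear_order_on (bundles p D) (pr j)"
  shows "lexi_efficient N (\<Union>i<p. D i) (bundles p D) pr
           (MPS N (\<Union>i<p. D i) (bundles p D) pr)"
proof -
  define M where "M = (\<Union>i<p. D i)"
  define B where "B = bundles p D"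
  define F where "F = mps_step N M B pr"
  define st0 :: "('o \<Rightarrow> real) \<times> ('a \<Rightarrow> 'o list \<Rightarrow> real)" where "st0 = (\<lambda>_. 1, \<lambda>_ _. 0)"
  define s where "s k = fst ((F^^k) st0)" for k
  define PP where "PP k = snd ((F^^k) st0)" for k
  define tp where "tp k j = top_bundle B pr (s k) j" for k j
  define r where "r k it = eat_rate N B pr (s k) it" for k it
  define d where "d k = stage_length N M B pr (s k)" for k
  have finM: "finite M" using assms(5) by (auto simp: M_def)
  have Bitems: "\<And>x it. x \<in> B \<Longrightarrow> it \<in> set x \<Longrightarrow> it \<in> M"
    by (auto simp: B_def M_def bundles_def in_set_conv_nth)
  have finB: "finite B"
  proof (rule finite_subset)
    show "B \<subseteq> {xs. set xs \<subseteq> M \<and> length xs = p}" using Bitems by (auto simp: B_def bundles_def)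
    show "finite {xs. set xs \<subseteq> M \<and> length xs = p}" using finM by (rule finite_lists_length_eq)
  qed
  have B0: "\<And>x. x \<in> B \<Longrightarrow> x!0 \<in> set x \<and> x!0 \<in> M"
  proof -
    fix x assume "x \<in> B"
    then have "length x = p" "x!0 \<in> D 0" using assms(4) by (auto simp: B_def bundles_def)
    then show "x!0 \<in> set x \<and> x!0 \<in> M" using assms(4) by (auto simp: M_def intro!: bexI[of _ 0])
  qed
  have Nne: "N \<noteq> {}" using assms(2,3) by auto
  have slo: "\<And>j. j \<in> N \<Longrightarrow> strict_linear_order_on B (pr j)" using assms(7) by (simp add: B_def)
  have s_Suc: "\<And>k. s (Suc k) = (\<lambda>it. s k it - d k * r k it)"
    by (simp add: s_def d_def r_def F_def mps_step_def Let_def)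
  have P_Suc: "\<And>k. PP (Suc k) = (\<lambda>j x. PP k j x + (if j \<in> N \<and> x = tp k j then d k else 0))"
    unfolding PP_def d_def tp_def s_def F_def by (simp add: mps_step_def Let_def)
  have s0: "s 0 = (\<lambda>_. 1)" by (simp add: s_def st0_def)
  have P0: "PP 0 = (\<lambda>_ _. 0)" by (simp add: PP_def st0_def)
  have r_nonneg: "\<And>k it. r k it \<ge> 0" by (simp add: r_def eat_rate_def)
  obtain K where K: "K \<le> card M" "mps_iter N M B pr (card M) st0 = (F^^K) st0"
    "\<forall>m<K. mps_continues N M B pr (s m)"
    "K = card M \<or> \<not> mps_continues N M B pr (s K)"
    using iter_char[of "card M" N M B pr st0] unfolding s_def F_def by blast
  have MPS_eq: "MPS N M B pr = PP K"
  proof -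
    have "MPS N M B pr = snd (mps_iter N M B pr (card M) st0)" by (simp only: MPS_def st0_def)
    then show ?thesis using K(2) by (simp only: PP_def)
  qed
  have top: "\<And>k j. \<exists>x. available B (s k) x \<Longrightarrow> j \<in> N \<Longrightarrow>
     available B (s k) (tp k j) \<and> (\<forall>y. available B (s k) y \<and> y \<noteq> tp k j \<longrightarrow> pr j (tp k j) y)"
  proof -
    fix k j assume ex: "\<exists>x. available B (s k) x" and j: "j \<in> N"
    show "available B (s k) (tp k j) \<and> (\<forall>y. available B (s k) y \<and> y \<noteq> tp k j \<longrightarrow> pr j (tp k j) y)"
      unfolding tp_def by (rule top_spec[of B pr j, OF slo[OF j] finB ex])
  qed
  have stage: "\<And>m. mps_continues N M B pr (s m) \<Longrightarrow>
      d m > 0 \<and> (\<exists>it0\<in>M. s m it0 > 0 \<and> s (Suc m) it0 = 0)"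
  proof -
    fix m assume c: "mps_continues N M B pr (s m)"
    let ?I = "{it \<in> M. r m it > 0}"
    let ?A = "(\<lambda>it. s m it / r m it) ` ?I"
    have Ine: "?I \<noteq> {}" using c by (simp add: mps_continues_def r_def)
    have ex: "\<exists>x. available B (s m) x" using c by (simp add: mps_continues_def)
    have spos: "\<And>it. it \<in> ?I \<Longrightarrow> s m it > 0"
    proof -
      fix it assume "it \<in> ?I"
      then have "card {j\<in>N. it \<in> set (tp m j)} > 0" by (simp add: r_def eat_rate_def tp_def)
      then have "{j\<in>N. it \<in> set (tp m j)} \<noteq> {}" by (metis card.empty less_irrefl)
      then obtain j where "j \<in> N" "it \<in> set (tp m j)" by blast
      then show "s m it > 0" using top[OF ex] by (auto simp: available_def)
    qed
    have dA: "d m = Min ?A"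
      by (simp add: d_def stage_length_def r_def setcompr_eq_image)
    have finA: "finite ?A" using finM by simp
    have Ane: "?A \<noteq> {}" using Ine by simp
    have "Min ?A \<in> ?A" using finA Ane by (rule Min_in)
    then obtain it0 where it0: "it0 \<in> ?I" "d m = s m it0 / r m it0" using dA by auto
    have "d m > 0" using it0 spos by (simp add: divide_pos_pos)
    moreover have "s (Suc m) it0 = 0" using it0 by (simp add: s_Suc)
    ultimately show "d m > 0 \<and> (\<exists>it0\<in>M. s m it0 > 0 \<and> s (Suc m) it0 = 0)"
      using it0 spos by blast
  qed
  have s_step: "\<And>k it. k < K \<Longrightarrow> s (Suc k) it \<le> s k it"
  proof -
    fix k it assume "k < K"
    then have "d k > 0" using stage K(3) by blast
    then show "s (Suc k) it \<le> s k it" using r_nonneg[of k it] by (simp add: s_Suc)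
  qed
  have s_anti: "\<And>a b it. a \<le> b \<Longrightarrow> b \<le> K \<Longrightarrow> s b it \<le> s a it"
  proof -
    fix a b it assume "a \<le> b" "b \<le> K"
    then show "s b it \<le> s a it"
    proof (induction b)
      case 0 then show ?case by simp
    next
      case (Suc b)
      show ?case
      proof (cases "a = Suc b")
        case True then show ?thesis by simp
      next
        case False
        then have "s b it \<le> s a it" using Suc by simp
        moreover have "s (Suc b) it \<le> s b it" using Suc.prems s_step by simp
        ultimately show ?thesis by linarith
      qed
    qed
  qed
  have count: "\<And>k. k \<le> K \<Longrightarrow> card {it\<in>M. s k it > 0} + k \<le> card M"
  proof -
    fix k assume "k \<le> K"
    then show "card {it\<in>M. s k it > 0} + k \<le> card M"
    proof (induction k)
      case 0 then show ?case using finM by (simp add: card_mono)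
    next
      case (Suc k)
      then have kK: "k < K" by simp
      obtain it0 where it0: "it0 \<in> M" "s k it0 > 0" "s (Suc k) it0 = 0"
        using stage K(3) kK by blast
      have "{it\<in>M. s (Suc k) it > 0} \<subset> {it\<in>M. s k it > 0}"
      proof
        show "{it\<in>M. s (Suc k) it > 0} \<subseteq> {it\<in>M. s k it > 0}"
          using s_step[OF kK] by (auto intro: less_le_trans)
        show "{it\<in>M. s (Suc k) it > 0} \<noteq> {it\<in>M. s k it > 0}"
        proof
          assume e: "{it\<in>M. s (Suc k) it > 0} = {it\<in>M. s k it > 0}"
          have "it0 \<in> {it\<in>M. s k it > 0}" using it0 by simp
          then have "it0 \<in> {it\<in>M. s (Suc k) it > 0}" using e by simp
          then show False using it0 by simp
        qed
      qed
      then have "card {it\<in>M. s (Suc k) it > 0} < card {it\<in>M. s k it > 0}"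
        using finM by (simp add: psubset_card_mono)
      then show ?case using Suc by simp
    qed
  qed
  have final: "\<And>x. \<not> available B (s K) x"
  proof
    fix x assume ax: "available B (s K) x"
    then have xB: "x \<in> B" by (simp add: available_def)
    show False
    proof (cases "K = card M")
      case True
      then have "card {it\<in>M. s K it > 0} = 0" using count[of K] by simp
      then have "{it\<in>M. s K it > 0} = {}" using finM by simp
      then show False using ax B0[OF xB] by (auto simp: available_def)
    next
      case False
      then have nc: "\<not> mps_continues N M B pr (s K)" using K(4) by simp
      then have e: "{it\<in>M. eat_rate N B pr (s K) it > 0} = {}" using ax by (auto simp: mps_continues_def)
      obtain j where j: "j \<in> N" using Nne by auto
      have "available B (s K) (tp K j)" using top[of K j] ax j by blast
      then have tB: "tp K j \<in> B" by (simp add: available_def)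
      let ?it = "tp K j ! 0"
      have "j \<in> {j\<in>N. ?it \<in> set (top_bundle B pr (s K) j)}" using j B0[OF tB] by (simp add: tp_def)
      then have "card {j\<in>N. ?it \<in> set (top_bundle B pr (s K) j)} > 0"
        using assms(1) by (simp add: card_gt_0_iff) blast
      then have "eat_rate N B pr (s K) ?it > 0" by (simp add: eat_rate_def)
      then show False using e B0[OF tB] by auto
    qed
  qed
  have P_formula: "\<And>k j x. PP k j x = (\<Sum>m<k. if j \<in> N \<and> x = tp m j then d m else 0)"
  proof -
    fix k j x show "PP k j x = (\<Sum>m<k. if j \<in> N \<and> x = tp m j then d m else 0)"
      by (induction k) (simp_all add: P0 P_Suc)
  qed
  have consumption: "\<And>k it. k \<le> K \<Longrightarrow>
      (\<Sum>j\<in>N. \<Sum>x\<in>{x\<in>B. it \<in> set x}. PP k j x) = 1 - s k it"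
  proof -
    fix k it assume "k \<le> K"
    then show "(\<Sum>j\<in>N. \<Sum>x\<in>{x\<in>B. it \<in> set x}. PP k j x) = 1 - s k it"
    proof (induction k)
      case 0 then show ?case by (simp add: P0 s0)
    next
      case (Suc k)
      then have kK: "k < K" by simp
      have ex: "\<exists>x. available B (s k) x" using K(3) kK by (simp add: mps_continues_def)
      have inner: "\<And>j. j \<in> N \<Longrightarrow> (\<Sum>x\<in>{x\<in>B. it \<in> set x}. (if j \<in> N \<and> x = tp k j then d k else 0))
           = (if it \<in> set (tp k j) then d k else 0)"
      proof -
        fix j assume j: "j \<in> N"
        have "tp k j \<in> B" using top[OF ex j] by (simp add: available_def)
        then show "(\<Sum>x\<in>{x\<in>B. it \<in> set x}. (if j \<in> N \<and> x = tp k j then d k else 0))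
           = (if it \<in> set (tp k j) then d k else 0)"
          using j finB by (simp add: sum.delta')
      qed
      have extra: "(\<Sum>j\<in>N. \<Sum>x\<in>{x\<in>B. it \<in> set x}. (if j \<in> N \<and> x = tp k j then d k else 0))
          = d k * r k it"
      proof -
        have "(\<Sum>j\<in>N. \<Sum>x\<in>{x\<in>B. it \<in> set x}. (if j \<in> N \<and> x = tp k j then d k else 0))
            = (\<Sum>j\<in>N. (if it \<in> set (tp k j) then d k else 0))"
          using inner by (rule sum.cong[OF refl])
        also have "\<dots> = (\<Sum>j\<in>{j\<in>N. it \<in> set (tp k j)}. d k)"
          using assms(1) by (simp only: sum.inter_filter)
        also have "\<dots> = d k * r k it"
          by (simp add: r_def eat_rate_def tp_def)
        finally show ?thesis .
      qed
      have "(\<Sum>j\<in>N. \<Sum>x\<in>{x\<in>B. it \<in> set x}. PP (Suc k) j x)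
          = (\<Sum>j\<in>N. \<Sum>x\<in>{x\<in>B. it \<in> set x}. PP k j x)
            + (\<Sum>j\<in>N. \<Sum>x\<in>{x\<in>B. it \<in> set x}. (if j \<in> N \<and> x = tp k j then d k else 0))"
        by (simp add: P_Suc sum.distrib)
      also have "\<dots> = 1 - s k it + d k * r k it" using Suc kK extra by simp
      also have "\<dots> = 1 - s (Suc k) it" by (simp add: s_Suc)
      finally show ?case .
    qed
  qed
  show ?thesis
    unfolding M_def[symmetric] B_def[symmetric] MPS_eq lexi_efficient_def
  proof
    assume "\<exists>Q. is_assignment N M B Q \<and> (\<forall>j\<in>N. lex_dominates B (pr j) (Q j) (PP K j))"
    then obtain Q where Qa: "is_assignment N M B Q"
      and Qd: "\<forall>j\<in>N. lex_dominates B (pr j) (Q j) (PP K j)" by blast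
    from Qd have "\<forall>j\<in>N. \<exists>x. x \<in> B \<and> Q j x > PP K j x \<and>
        (\<forall>y\<in>B. pr j y x \<longrightarrow> Q j y \<ge> PP K j y)"
      unfolding lex_dominates_def by blast
    then obtain X where X0: "\<forall>j\<in>N. X j \<in> B \<and> Q j (X j) > PP K j (X j) \<and>
        (\<forall>y\<in>B. pr j y (X j) \<longrightarrow> Q j y \<ge> PP K j y)"
      by (rule bchoice[elim_format]) blast
    then have X: "\<And>j. j \<in> N \<Longrightarrow> X j \<in> B \<and> Q j (X j) > PP K j (X j) \<and>
        (\<forall>y\<in>B. pr j y (X j) \<longrightarrow> Q j y \<ge> PP K j y)" by blast
    define u where "u x = (LEAST k. \<not> available B (s k) x)" for x
    have u_le: "\<And>x. u x \<le> K" unfolding u_def using final by (simp add: Least_le)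
    have u_not: "\<And>x. \<not> available B (s (u x)) x" unfolding u_def using final by (rule LeastI)
    have u_av: "\<And>x k. k < u x \<Longrightarrow> available B (s k) x" unfolding u_def using not_less_Least by blast
    obtain j0 where j0: "j0 \<in> N" "\<forall>j. j \<in> N \<longrightarrow> u (X j0) \<le> u (X j)"
      using ex_has_least_nat[of "\<lambda>j. j \<in> N" _ "\<lambda>j. u (X j)"] Nne by blast
    define ks where "ks = u (X j0)"
    have xj0: "X j0 \<in> B" using X j0(1) by blast
    obtain o' where o': "o' \<in> set (X j0)" "s ks o' \<le> 0"
      using u_not[of "X j0"] xj0 by (auto simp: available_def ks_def not_less)
    have oM: "o' \<in> M" using Bitems xj0 o' by blast
    have ksK: "ks \<le> K" by (simp add: ks_def u_le)
    have ge: "\<And>i y. i \<in> N \<Longrightarrow> y \<in> {x\<in>B. o' \<in> set x} \<Longrightarrow> PP K i y \<le> Q i y"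
    proof -
      fix i y assume i: "i \<in> N" and y: "y \<in> {x\<in>B. o' \<in> set x}"
      show "PP K i y \<le> Q i y"
      proof (cases "PP K i y > 0")
        case False
        have "0 \<le> Q i y" using Qa i y unfolding is_assignment_def by blast
        then show ?thesis using False by linarith
      next
        case True
        have "\<exists>m<K. y = tp m i"
        proof (rule ccontr)
          assume "\<not> (\<exists>m<K. y = tp m i)"
          then have "PP K i y = 0" unfolding P_formula by (intro sum.neutral) auto
          then show False using True by simp
        qed
        then obtain m where m: "m < K" "y = tp m i" by blast
        have ex: "\<exists>x. available B (s m) x" using K(3) m(1) by (simp add: mps_continues_def)
        have avy: "available B (s m) y" using top[OF ex i] m by simp
        then have "s m o' > 0" using y by (simp add: available_def)
        have "m < ks"
        proof (rule ccontr)
          assume "\<not> m < ks"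
          then have "s m o' \<le> s ks o'" using s_anti m(1) by simp
          then show False using \<open>s m o' > 0\<close> o' by linarith
        qed
        also have "ks \<le> u (X i)" using j0 i by (simp add: ks_def)
        finally have "available B (s m) (X i)" by (rule u_av)
        then have "y = X i \<or> pr i y (X i)" using top[OF ex i] m by auto
        then show ?thesis
        proof
          assume "y = X i" then show ?thesis using X[OF i] by simp
        next
          assume "pr i y (X i)" then show ?thesis using X[OF i] y by blast
        qed
      qed
    qed
    have "(\<Sum>j\<in>N. \<Sum>x\<in>{x\<in>B. o' \<in> set x}. PP K j x) < (\<Sum>j\<in>N. \<Sum>x\<in>{x\<in>B. o' \<in> set x}. Q j x)"
    proof (rule sum_strict_mono_ex1[OF assms(1)])
      show "\<forall>j\<in>N. (\<Sum>x\<in>{x\<in>B. o' \<in> set x}. PP K j x) \<le> (\<Sum>x\<in>{x\<in>B. o' \<in> set x}. Q j x)"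
        using ge by (intro ballI sum_mono) blast
      have "(\<Sum>x\<in>{x\<in>B. o' \<in> set x}. PP K j0 x) < (\<Sum>x\<in>{x\<in>B. o' \<in> set x}. Q j0 x)"
      proof (rule sum_strict_mono_ex1)
        show "finite {x\<in>B. o' \<in> set x}" using finB by simp
        show "\<forall>x\<in>{x\<in>B. o' \<in> set x}. PP K j0 x \<le> Q j0 x" using ge j0(1) by blast
        show "\<exists>x\<in>{x\<in>B. o' \<in> set x}. PP K j0 x < Q j0 x"
          using X[OF j0(1)] o' xj0 by blast
      qed
      then show "\<exists>j\<in>N. (\<Sum>x\<in>{x\<in>B. o' \<in> set x}. PP K j x) < (\<Sum>x\<in>{x\<in>B. o' \<in> set x}. Q j x)"
        using j0(1) by blast
    qed
    moreover have "(\<Sum>j\<in>N. \<Sum>x\<in>{x\<in>B. o' \<in> set x}. PP K j x) = 1 - s K o'"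
      using consumption by simp
    moreover have "s K o' \<le> s ks o'" using s_anti ksK by simp
    moreover have "(\<Sum>j\<in>N. \<Sum>x\<in>{x\<in>B. o' \<in> set x}. Q j x) = 1"
      using Qa oM unfolding is_assignment_def by blast
    ultimately show False using o'(2) by linarith
  qed
qed

end
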